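(* In the FHMA network described below, let $N_{\mathrm{opt}}$ be the integer number of sub-bands $N\ge1$ minimizing the mean local delay $D(N)$. Then $$N_{\mathrm{opt}}\in[\lfloor t_0\rfloor,\lceil t_0\rceil+2],\qquad t_0=\lambda c_d r_0^d\theta^{\delta}C(\delta)+\theta r_0^\alpha WN_0.$$
   Context: Model: transmitters form a homogeneous Poisson point process $\Phi$ of intensity $\lambda>0$ in $\mathbb{R}^d$; the typical receiver is at the origin and its desired transmitter $x_0\in\Phi$ is at distance $r_0>0$; probabilities are under the Palm distribution at $x_0$. Time is slotted. Path loss $\kappa r^{-\alpha}$ with $\alpha>d$, $\delta=d/\alpha\in(0,1)$. Power fading coefficients are i.i.d. exponential with mean $1$ over transmitters and slots, independent of everything. Unit power, always backlogged transmitters. Bandwidth $W$, noise power spectral density $N_r$, $N_0=N_r/\kappa$, SINR threshold $\theta>0$. $c_d$ is the volume of the unit ball in $\mathbb{R}^d$, $C(\delta)=\Gamma(1+\delta)\Gamma(1-\delta)=\frac{\pi\delta}{\sin(\pi\delta)}$. FHMA with $N$ sub-bands: each transmitter $x$ independently picks a sub-band $\mathcal{S}_k(x)$ uniformly from $\{1,\dots,N\}$ in each slot $k$; $\mathrm{SINR}_k=\frac{h_{k,x_0}r_0^{-\alpha}}{WN_0/N+\sum_{x\in\Phi\setminus\{x_0\}}h_{k,x}|x|^{-\alpha}\mathbf{1}(\mathcal{S}_k(x)=\mathcal{S}_k(x_0))}$; a slot is successful if $\mathrm{SINR}_k>\theta$; the local delay is the number of slots until the $N$-th successful slot and $D(N)$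 is its mean. (The mean equals $D(N)=N\exp\left(\frac{\lambda c_d r_0^d\theta^{\delta}C(\delta)}{(N-1)^{1-\delta}N^{\delta}}+\frac{\theta r_0^\alpha WN_0}{N}\right)$, with $D(1)=\infty$.) *)

theory Defs
  imports "HOL-Analysis.Analysis"
begin

definition unit_ball_vol :: "nat \<Rightarrow> real" where
  "unit_ball_vol d = pi powr (real d / 2) / Gamma (real d / 2 + 1)"

definition Cdelta :: "real \<Rightarrow> real" where
  "Cdelta \<delta> = Gamma (1 + \<delta>) * Gamma (1 - \<delta>)"

definition mean_delay ::
  "real \<Rightarrow> nat \<Rightarrow> real \<Rightarrow> real \<Rightarrow> real \<Rightarrow> real \<Rightarrow> real \<Rightarrow> nat \<Rightarrow> ereal" where
  "mean_delay lam d \<alpha> r0 \<theta> W N0 N =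
     (if N \<le> 1 then \<infinity> else
      (let \<delta> = real d / \<alpha> in
       ereal (real N * exp (lam * unit_ball_vol d * r0 ^ d * \<theta> powr \<delta> * Cdelta \<delta>
                 / ((real N - 1) powr (1 - \<delta>) * real N powr \<delta>)
               + \<theta> * r0 powr \<alpha> * W * N0 / real N))))"

end

theory Submission imports Defs begin

lemma p_deriv:
  fixes x \<delta> :: real assumes "x > 1"
  shows "((\<lambda>x. (x-1) powr (1-\<delta>) * x powr \<delta>) has_real_derivative
     ((x-1) powr (1-\<delta>) * x powr \<delta>) * ((1-\<delta>)/(x-1) + \<delta>/x)) (at x)"
proof -
  have a: "(x-1) powr (1-\<delta> - real 1) = (x-1) powr (1-\<delta>) / (x-1)"
    by (simp only: powr_diff of_nat_1) (use assms in simp)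
  have b: "x powr (\<delta> - real 1) = x powr \<delta> / x"
    by (simp only: powr_diff of_nat_1) (use assms in simp)
  have g1: "((\<lambda>x. x - 1) has_real_derivative 1) (at x)"
    by (auto intro!: derivative_eq_intros)
  have d1: "((\<lambda>x. (x-1) powr (1-\<delta>)) has_real_derivative (1-\<delta>) * ((x-1) powr (1-\<delta>) / (x-1)) * 1) (at x)"
    using DERIV_fun_powr[OF g1, of "1-\<delta>"] assms a by simp
  have d2: "((\<lambda>x. x powr \<delta>) has_real_derivative \<delta> * (x powr \<delta> / x) * 1) (at x)"
    using DERIV_fun_powr[OF DERIV_ident, of x \<delta>] assms b by simp
  have "((\<lambda>x. (x-1) powr (1-\<delta>) * x powr \<delta>) has_real_derivative
     (1-\<delta>) * ((x-1) powr (1-\<delta>) / (x-1)) * 1 * x powr \<delta> + \<delta> * (x powr \<delta> / x) * 1 * (x-1) powr (1-\<delta>)) (at x)"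
    by (rule DERIV_mult[OF d1 d2])
  moreover have "(1-\<delta>) * ((x-1) powr (1-\<delta>) / (x-1)) * 1 * x powr \<delta> + \<delta> * (x powr \<delta> / x) * 1 * (x-1) powr (1-\<delta>)
     = ((x-1) powr (1-\<delta>) * x powr \<delta>) * ((1-\<delta>)/(x-1) + \<delta>/x)"
    by (simp add: algebra_simps)
  ultimately show ?thesis by simp
qed

lemma p_bounds:
  fixes x \<delta> :: real assumes "x > 1" "0 < \<delta>" "\<delta> < 1"
  shows "x - 1 \<le> (x-1) powr (1-\<delta>) * x powr \<delta>" "(x-1) powr (1-\<delta>) * x powr \<delta> \<le> x"
proof -
  have "(x-1) powr (1-\<delta>) * x powr \<delta> \<ge> (x-1) powr (1-\<delta>) * (x-1) powr \<delta>"
    using assms by (intro mult_left_mono powr_mono2) auto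
  also have "(x-1) powr (1-\<delta>) * (x-1) powr \<delta> = x - 1"
    using assms by (simp add: powr_add[symmetric])
  finally show "x - 1 \<le> (x-1) powr (1-\<delta>) * x powr \<delta>" .
  have "(x-1) powr (1-\<delta>) * x powr \<delta> \<le> x powr (1-\<delta>) * x powr \<delta>"
    using assms by (intro mult_right_mono powr_mono2) auto
  also have "x powr (1-\<delta>) * x powr \<delta> = x"
    using assms by (simp add: powr_add[symmetric])
  finally show "(x-1) powr (1-\<delta>) * x powr \<delta> \<le> x" .
qed

definition GG :: "real \<Rightarrow> real \<Rightarrow> real \<Rightarrow> real \<Rightarrow> real" where
  "GG \<delta> A B x = ln x + A / ((x-1) powr (1-\<delta>) * x powr \<delta>) + B / x"

lemma G_deriv:
  fixes x \<delta> A B :: real assumes "x > 1"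
  defines "p \<equiv> (x-1) powr (1-\<delta>) * x powr \<delta>"
  shows "(GG \<delta> A B has_real_derivative
     1/x - A * ((1-\<delta>)/(x-1) + \<delta>/x) / p - B / x^2) (at x)"
proof -
  have pp: "p > 0" using assms by (simp add: p_def)
  define P where "P = (\<lambda>x::real. (x-1) powr (1-\<delta>) * x powr \<delta>)"
  have dP: "(P has_real_derivative p * ((1-\<delta>)/(x-1) + \<delta>/x)) (at x)"
    unfolding P_def p_def by (rule p_deriv[OF assms(1)])
  have Px: "P x = p" by (simp add: P_def p_def)
  have d1: "((\<lambda>x. inverse (P x)) has_real_derivative - (inverse p * (p * ((1-\<delta>)/(x-1) + \<delta>/x)) * inverse p)) (at x)"
    using DERIV_inverse'[OF dP] pp Px by simp
  have d2: "(inverse has_real_derivative - (inverse x * inverse x)) (at x)"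
    using DERIV_inverse'[OF DERIV_ident, of x UNIV] assms by simp
  have "((\<lambda>x. ln x + A * inverse (P x) + B * inverse x) has_real_derivative
     inverse x + A * (- (inverse p * (p * ((1-\<delta>)/(x-1) + \<delta>/x)) * inverse p)) + B * (- (inverse x * inverse x))) (at x)"
    by (intro DERIV_add DERIV_cmult d1 d2 DERIV_ln) (use assms in auto)
  moreover have "GG \<delta> A B = (\<lambda>x. ln x + A * inverse (P x) + B * inverse x)"
    by (simp add: GG_def P_def divide_inverse fun_eq_iff)
  moreover have "inverse x + A * (- (inverse p * (p * ((1-\<delta>)/(x-1) + \<delta>/x)) * inverse p)) + B * (- (inverse x * inverse x))
     = 1/x - A * ((1-\<delta>)/(x-1) + \<delta>/x) / p - B / x^2"
    using pp assms(1) by (simp add: inverse_eq_divide power2_eq_square field_simps)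
  ultimately show ?thesis by simp
qed

lemma G_dec:
  fixes x \<delta> A B :: real assumes "x > 1" "0 < \<delta>" "\<delta> < 1" "A > 0" "B > 0"
  defines "p \<equiv> (x-1) powr (1-\<delta>) * x powr \<delta>"
  shows "1/x - A * ((1-\<delta>)/(x-1) + \<delta>/x) / p - B / x^2 \<le> (x - (A+B)) / x^2"
proof -
  note pb = p_bounds[OF assms(1-3), folded p_def]
  have pp: "p > 0" using pb assms by linarith
  have S: "(1-\<delta>)/(x-1) + \<delta>/x \<ge> 1/x"
  proof -
    have "(1-\<delta>)/(x-1) \<ge> (1-\<delta>)/x" using assms by (intro divide_left_mono) auto
    then show ?thesis using assms by (simp add: diff_divide_distrib)
  qed
  have ip: "1/p \<ge> 1/x" using pb pp by (intro divide_left_mono) auto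
  have "A * ((1-\<delta>)/(x-1) + \<delta>/x) / p \<ge> A * (1/x) * (1/x)"
    using S ip assms by (simp add: divide_inverse) (intro mult_mono mult_left_mono; auto simp: divide_inverse)
  moreover have "A * (1/x) * (1/x) + B/x^2 = (A+B)/x^2"
    by (simp add: power2_eq_square add_divide_distrib)
  moreover have "1/x - (A+B)/x^2 = (x-(A+B))/x^2"
    using assms(1) by (simp add: power2_eq_square diff_divide_distrib)
  ultimately show ?thesis by linarith
qed

lemma G_inc:
  fixes x \<delta> A B :: real assumes "x > 1" "0 < \<delta>" "\<delta> < 1" "A > 0" "B > 0"
  defines "p \<equiv> (x-1) powr (1-\<delta>) * x powr \<delta>"
  shows "1/x - A * ((1-\<delta>)/(x-1) + \<delta>/x) / p - B / x^2 \<ge> 1/x - (A+B) / (x-1)^2"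
proof -
  note pb = p_bounds[OF assms(1-3), folded p_def]
  have pp: "p > 0" using pb assms by linarith
  have S: "(1-\<delta>)/(x-1) + \<delta>/x \<le> 1/(x-1)"
  proof -
    have "\<delta>/x \<le> \<delta>/(x-1)" using assms by (intro divide_left_mono) auto
    then show ?thesis using assms by (simp add: diff_divide_distrib)
  qed
  have S0: "(1-\<delta>)/(x-1) + \<delta>/x \<ge> 0" using assms by auto
  have ip: "1/p \<le> 1/(x-1)" using pb pp assms by (intro divide_left_mono) auto
  have "A * ((1-\<delta>)/(x-1) + \<delta>/x) / p \<le> A * (1/(x-1)) * (1/(x-1))"
    using S ip assms S0 pp by (simp add: divide_inverse) (intro mult_mono mult_left_mono; auto simp: divide_inverse)
  moreover have "B / x^2 \<le> B / (x-1)^2" using assms(1-5)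
    by (intro divide_left_mono power_mono) auto
  moreover have "A * (1/(x-1)) * (1/(x-1)) + B/(x-1)^2 = (A+B)/(x-1)^2"
    by (simp add: power2_eq_square add_divide_distrib)
  ultimately show ?thesis by linarith
qed


lemma GG_cont:
  fixes a b \<delta> A B :: real assumes "a > 1"
  shows "continuous_on {a..b} (GG \<delta> A B)"
  by (intro continuous_at_imp_continuous_on ballI DERIV_isCont[OF G_deriv]) (use assms in auto)

lemma GG_dec_step:
  fixes n \<delta> A B :: real assumes "n \<ge> 2" "n + 1 \<le> A + B" "0 < \<delta>" "\<delta> < 1" "A > 0" "B > 0"
  shows "GG \<delta> A B (n+1) < GG \<delta> A B n"
proof (rule DERIV_neg_imp_decreasing_open[of n "n+1" "GG \<delta> A B"])
  show "n < n + 1" by simp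
  show "continuous_on {n..n+1} (GG \<delta> A B)" by (rule GG_cont) (use assms in auto)
  fix x assume x: "n < x" "x < n + 1"
  have x1: "x > 1" using x assms by auto
  have "(x - (A+B)) / x^2 < 0" using x assms by (intro divide_neg_pos) auto
  then show "\<exists>y. (GG \<delta> A B has_real_derivative y) (at x) \<and> y < 0"
    using G_deriv[OF x1, of \<delta> A B] G_dec[OF x1 assms(3-6)] by fastforce
qed

lemma GG_inc_step:
  fixes n \<delta> A B :: real assumes "n \<ge> 2" "n \<ge> A + B + 2" "0 < \<delta>" "\<delta> < 1" "A > 0" "B > 0"
  shows "GG \<delta> A B n < GG \<delta> A B (n+1)"
proof (rule DERIV_pos_imp_increasing_open[of n "n+1" "GG \<delta> A B"])
  show "n < n + 1" by simp
  show "continuous_on {n..n+1} (GG \<delta> A B)" by (rule GG_cont) (use assms in auto)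
  fix x assume x: "n < x" "x < n + 1"
  have x1: "x > 1" using x assms by auto
  have "(A+B) * x \<le> (x - 2) * x" using x assms by (intro mult_right_mono) auto
  then have "(A+B) * x < (x-1)^2" by (simp add: power2_eq_square algebra_simps)
  then have "(A+B) / (x-1)^2 < 1 / x" using x1
    by (simp add: divide_simps)
  then have "1/x - (A+B)/(x-1)^2 > 0" by simp
  then show "\<exists>y. (GG \<delta> A B has_real_derivative y) (at x) \<and> y > 0"
    using G_deriv[OF x1, of \<delta> A B] G_inc[OF x1 assms(3-6)] by fastforce
qed

theorem theorem5:
  fixes lam \<alpha> r0 \<theta> W N0 :: real and d Nopt :: nat
  assumes "lam > 0" and "d \<ge> 1" and "\<alpha> > real d" and "r0 > 0" and "\<theta> > 0"
    and "W > 0" and "N0 > 0"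
    and "Nopt \<ge> 1"
    and "\<forall>M\<ge>1. mean_delay lam d \<alpha> r0 \<theta> W N0 Nopt \<le> mean_delay lam d \<alpha> r0 \<theta> W N0 M"
  shows "(let t0 = lam * unit_ball_vol d * r0 ^ d * \<theta> powr (real d / \<alpha>) * Cdelta (real d / \<alpha>)
                  + \<theta> * r0 powr \<alpha> * W * N0
         in of_int \<lfloor>t0\<rfloor> \<le> real Nopt \<and> real Nopt \<le> of_int \<lceil>t0\<rceil> + 2)"
proof -
  define \<delta> where "\<delta> = real d / \<alpha>"
  define A where "A = lam * unit_ball_vol d * r0 ^ d * \<theta> powr \<delta> * Cdelta \<delta>"
  define B where "B = \<theta> * r0 powr \<alpha> * W * N0"
  have al: "\<alpha> > 0" using assms(2,3) by linarith
  have d0: "0 < \<delta>" using assms(2) al by (simp add: \<delta>_def)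
  have d1: "\<delta> < 1" using assms(3) al by (simp add: \<delta>_def)
  have ubv: "unit_ball_vol d > 0" unfolding unit_ball_vol_def
    by (intro divide_pos_pos) auto
  have Cd: "Cdelta \<delta> > 0" unfolding Cdelta_def using d0 d1 by (intro mult_pos_pos Gamma_real_pos) auto
  have Ap: "A > 0" unfolding A_def using assms ubv Cd by (intro mult_pos_pos) auto
  have Bp: "B > 0" unfolding B_def using assms by (intro mult_pos_pos) auto
  have MD: "mean_delay lam d \<alpha> r0 \<theta> W N0 N = ereal (exp (GG \<delta> A B (real N)))" if "N \<ge> 2" for N
  proof -
    have "real N * exp (A / ((real N - 1) powr (1 - \<delta>) * real N powr \<delta>) + B / real N)
        = exp (GG \<delta> A B (real N))" using that
      by (simp add: GG_def exp_add)
    then show ?thesis using that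
      by (simp add: mean_delay_def Let_def \<delta>_def[symmetric] A_def B_def)
  qed
  have le: "GG \<delta> A B (real Nopt) \<le> GG \<delta> A B (real M)" if "M \<ge> 2" "Nopt \<ge> 2" for M
  proof -
    have "mean_delay lam d \<alpha> r0 \<theta> W N0 Nopt \<le> mean_delay lam d \<alpha> r0 \<theta> W N0 M"
      using assms(9) that by simp
    then have "exp (GG \<delta> A B (real Nopt)) \<le> exp (GG \<delta> A B (real M))"
      using MD[OF that(1)] MD[OF that(2)] by simp
    then show ?thesis by simp
  qed
  have N2: "Nopt \<ge> 2"
  proof (rule ccontr)
    assume "\<not> Nopt \<ge> 2"
    then have "Nopt = 1" using assms(8) by linarith
    then have "mean_delay lam d \<alpha> r0 \<theta> W N0 Nopt = \<infinity>" by (simp add: mean_delay_def)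
    moreover have "mean_delay lam d \<alpha> r0 \<theta> W N0 Nopt \<le> mean_delay lam d \<alpha> r0 \<theta> W N0 2"
      using assms(9) by simp
    ultimately show False using MD[of 2] by simp
  qed
  define t0 where "t0 = A + B"
  have lower: "of_int \<lfloor>t0\<rfloor> \<le> real Nopt"
  proof (rule ccontr)
    assume "\<not> ?thesis"
    then have "int Nopt < \<lfloor>t0\<rfloor>" by linarith
    then have "int Nopt + 1 \<le> \<lfloor>t0\<rfloor>" by linarith
    then have "real_of_int (int Nopt + 1) \<le> of_int \<lfloor>t0\<rfloor>" by (simp only: of_int_le_iff)
    then have "real Nopt + 1 \<le> of_int \<lfloor>t0\<rfloor>" by simp
    then have "real Nopt + 1 \<le> A + B" unfolding t0_def by linarith
    then have "GG \<delta> A B (real Nopt + 1) < GG \<delta> A B (real Nopt)"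
      using N2 d0 d1 Ap Bp by (intro GG_dec_step) auto
    moreover have "GG \<delta> A B (real Nopt) \<le> GG \<delta> A B (real (Nopt + 1))" using le[of "Nopt+1"] N2 by auto
    moreover have "real (Nopt + 1) = real Nopt + 1" by simp
    ultimately show False by (metis not_le)
  qed
  have upper: "real Nopt \<le> of_int \<lceil>t0\<rceil> + 2"
  proof (rule ccontr)
    assume "\<not> ?thesis"
    then have "int Nopt > \<lceil>t0\<rceil> + 2" by linarith
    then have "int Nopt \<ge> \<lceil>t0\<rceil> + 3" by linarith
    then have "real_of_int (int Nopt) \<ge> of_int (\<lceil>t0\<rceil> + 3)" by (simp only: of_int_le_iff)
    then have a: "real Nopt \<ge> of_int \<lceil>t0\<rceil> + 3" by simp
    have c0: "t0 \<le> of_int \<lceil>t0\<rceil>" by (rule le_of_int_ceiling)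
    have e: "real (Nopt - 1) = real Nopt - 1" using N2 by (simp add: of_nat_diff)
    have b: "real (Nopt - 1) \<ge> A + B + 2" using a c0 e unfolding t0_def by linarith
    have c: "real (Nopt - 1) \<ge> 2" using b Ap Bp by linarith
    have "GG \<delta> A B (real (Nopt - 1)) < GG \<delta> A B (real (Nopt - 1) + 1)"
      using b c d0 d1 Ap Bp by (intro GG_inc_step) auto
    moreover have "real (Nopt - 1) + 1 = real Nopt" using N2 by (simp add: of_nat_diff)
    moreover have "Nopt - 1 \<ge> 2" using c by linarith
    ultimately show False using le[of "Nopt - 1"] N2 by auto
  qed
  show ?thesis using lower upper unfolding Let_def t0_def A_def B_def \<delta>_def by simp
qed

end
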